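(* Let $p$ be a graph parameter such that $p(G\uplus H)=\max(p(G),p(H))$ for all graphs $G,H$ (where $\uplus$ is disjoint union). Let $\mathcal{A}$ be a class of structures of bounded arity $r$ such that the class of Gaifman graphs of structures in $\mathcal{A}$ is fractionally-$p$-fragile. Then $\mathcal{A}$ is $p$-pliable.
   Context: A $\sigma$-structure $\mathbb{A}$ is a finite domain $A$ with functions $f^{\mathbb{A}}\colon A^{\mathrm{ar}(f)}\to\mathbb{Q}_{\ge0}$, $f\in\sigma$; bounded arity $r$ means $\mathrm{ar}(f)\le r$ for all symbols. $\mathrm{opt}(\mathbb{A},\mathbb{B})=\max_{h\colon A\to B}\sum_{f}\sum_{\bar x}f^{\mathbb{A}}(\bar x)f^{\mathbb{B}}(h(\bar x))$ over all maps; $d_{\mathrm{opt}}(\mathbb{A},\mathbb{B})=\sup_{\mathbb{C}}|\ln\mathrm{opt}(\mathbb{A},\mathbb{C})-\ln\mathrm{opt}(\mathbb{B},\mathbb{C})|$ over $\sigma$-structures $\mathbb{C}$ ($\ln0=-\infty$, $|\ln0-\ln0|=0$). The Gaifman graph of $\mathbb{A}$ has vertex set $A$, with distinct $u,v$ adjacent iff they occur together in a tuple $\bar x$ with $f^{\mathbb{A}}(\bar x)>0$; $p(\mathbb{A})$ is $p$ of the Gaifman graph. $\mathcal{A}$ is $p$-pliable if for every $\varepsilon>0$ there is $k$ such that every $\mathbb{A}\in\mathcal{A}$ (signature $\sigma$) has a $\sigma$-structure $\mathbb{B}$ with $p(\mathbb{B})\le k$ and $d_{\mathrm{opt}}(\mathbb{A},\mathbb{B})\le\varepsilon$.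 A class of graphs $\mathcal{G}$ is fractionally-$p$-fragile if for every $\varepsilon>0$ there is $k$ such that every $G\in\mathcal{G}$ has a probability distribution $\pi$ over sets $X\subseteq V(G)$ with $p(G-X)\le k$ such that $\Pr_{X\sim\pi}[v\in X]\le\varepsilon$ for every $v\in V(G)$. *)

theory Defs
  imports "HOL-Probability.Probability_Mass_Function" "HOL-Library.Extended_Real" "HOL-Library.FuncSet"
begin

text \<open>Finite simple graphs on natural-number vertices: a vertex set and a set of
  edges, each edge being a 2-element set of vertices.\<close>
type_synonym graph = "nat set \<times> nat set set"

definition wf_graph :: "graph \<Rightarrow> bool" where
  "wf_graph G \<longleftrightarrow> finite (fst G) \<and>
     (\<forall>e\<in>snd G. \<exists>u v. u \<in> fst G \<and> v \<in> fst G \<and> u \<noteq> v \<and> e = {u, v})"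

definition graph_iso :: "graph \<Rightarrow> graph \<Rightarrow> bool" where
  "graph_iso G H \<longleftrightarrow> (\<exists>f. bij_betw f (fst G) (fst H) \<and>
     (\<forall>u\<in>fst G. \<forall>v\<in>fst G. {u, v} \<in> snd G \<longleftrightarrow> {f u, f v} \<in> snd H))"

definition disj_union :: "graph \<Rightarrow> graph \<Rightarrow> graph" where
  "disj_union G H =
     ((\<lambda>v. 2 * v) ` fst G \<union> (\<lambda>v. 2 * v + 1) ` fst H,
      (\<lambda>e. (\<lambda>v. 2 * v) ` e) ` snd G \<union> (\<lambda>e. (\<lambda>v. 2 * v + 1) ` e) ` snd H)"

definition del_vertices :: "graph \<Rightarrow> nat set \<Rightarrow> graph" where
  "del_vertices G X = (fst G - X, {e \<in> snd G. e \<inter> X = {}})"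

definition frac_fragile :: "(graph \<Rightarrow> nat) \<Rightarrow> graph set \<Rightarrow> bool" where
  "frac_fragile p \<G> \<longleftrightarrow>
     (\<forall>\<epsilon>::real. \<epsilon> > 0 \<longrightarrow> (\<exists>k::nat. \<forall>G\<in>\<G>. \<exists>\<pi> :: nat set pmf.
        (\<forall>X\<in>set_pmf \<pi>. X \<subseteq> fst G \<and> p (del_vertices G X) \<le> k) \<and>
        (\<forall>v\<in>fst G. measure_pmf.prob \<pi> {X. v \<in> X} \<le> \<epsilon>)))"

text \<open>A valued structure: its signature (symbols and arities), a domain, and the
  interpretation of each symbol as a function from tuples (lists of length
  the arity) to nonnegative rationals. Only tuples over the domain of the right
  length matter.\<close>
record 's vstruct =
  syms :: "'s set"
  ar :: "'s \<Rightarrow> nat"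
  sdom :: "nat set"
  sfn :: "'s \<Rightarrow> nat list \<Rightarrow> rat"

definition tuples :: "nat set \<Rightarrow> nat \<Rightarrow> nat list set" where
  "tuples D n = {xs. set xs \<subseteq> D \<and> length xs = n}"

definition is_struct :: "('s, 'b) vstruct_scheme \<Rightarrow> bool" where
  "is_struct A \<longleftrightarrow> finite (syms A) \<and> finite (sdom A) \<and> sdom A \<noteq> {} \<and>
     (\<forall>f\<in>syms A. \<forall>xs\<in>tuples (sdom A) (ar A f). sfn A f xs \<ge> 0)"

definition same_sig :: "'s vstruct \<Rightarrow> 's vstruct \<Rightarrow> bool" where
  "same_sig A B \<longleftrightarrow> syms A = syms B \<and> (\<forall>f\<in>syms A. ar A f = ar B f)"

definition opt :: "'s vstruct \<Rightarrow> 's vstruct \<Rightarrow> real" where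
  "opt A C = Max ((\<lambda>h. \<Sum>f\<in>syms A. \<Sum>xs\<in>tuples (sdom A) (ar A f).
        real_of_rat (sfn A f xs * sfn C f (map h xs))) ` (sdom A \<rightarrow>\<^sub>E sdom C))"

text \<open>|ln a - ln b| with ln 0 = -infinity and |ln 0 - ln 0| = 0.\<close>
definition ln_dist :: "real \<Rightarrow> real \<Rightarrow> ereal" where
  "ln_dist a b = (if a = 0 \<and> b = 0 then 0
                  else if a = 0 \<or> b = 0 then \<infinity>
                  else ereal \<bar>ln a - ln b\<bar>)"

definition d_opt :: "'s vstruct \<Rightarrow> 's vstruct \<Rightarrow> ereal" where
  "d_opt A B = Sup {ln_dist (opt A C) (opt B C) | C. is_struct C \<and> same_sig C A}"

definition gaifman :: "'s vstruct \<Rightarrow> graph" where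
  "gaifman A = (sdom A, {{u, v} | u v. u \<noteq> v \<and>
      (\<exists>f\<in>syms A. \<exists>xs\<in>tuples (sdom A) (ar A f). sfn A f xs > 0 \<and> u \<in> set xs \<and> v \<in> set xs)})"

definition pliable :: "(graph \<Rightarrow> nat) \<Rightarrow> 's vstruct set \<Rightarrow> bool" where
  "pliable p \<A> \<longleftrightarrow>
     (\<forall>\<epsilon>::real. \<epsilon> > 0 \<longrightarrow> (\<exists>k::nat. \<forall>A\<in>\<A>. \<exists>B. is_struct B \<and> same_sig B A \<and>
        p (gaifman B) \<le> k \<and> d_opt A B \<le> ereal \<epsilon>))"

end

theory Submission
  imports Defs "HOL-Library.Nat_Bijection"
begin


definition induced :: "graph \<Rightarrow> nat set \<Rightarrow> graph" where
  "induced G S = (S, {e \<in> snd G. e \<subseteq> S})"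

lemma wf_edge: "wf_graph G \<Longrightarrow> e \<in> snd G \<Longrightarrow> e \<subseteq> fst G"
  unfolding wf_graph_def by force

lemma wf_induced: "wf_graph G \<Longrightarrow> S \<subseteq> fst G \<Longrightarrow> wf_graph (induced G S)"
  unfolding wf_graph_def induced_def by (metis (no_types, lifting) finite_subset fst_conv insert_subset mem_Collect_eq snd_conv)

lemma induced_all: assumes "wf_graph G" shows "induced G (fst G) = G"
proof -
  have "{e \<in> snd G. e \<subseteq> fst G} = snd G" using wf_edge[OF assms] by blast
  then show ?thesis by (simp add: induced_def)
qed

lemma iso_split:
  assumes wf: "wf_graph G" and S: "S \<subseteq> fst G"
    and noc: "\<forall>e\<in>snd G. e \<subseteq> S \<or> e \<subseteq> fst G - S"
  shows "graph_iso G (disj_union (induced G S) (induced G (fst G - S)))"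
proof -
  define f where "f v = (if v \<in> S then 2 * v else 2 * v + 1)" for v :: nat
  have inj: "inj_on f (fst G)"
  proof (rule inj_onI)
    fix x y assume eq: "f x = f y"
    have ne: "2 * a \<noteq> 2 * b + 1" for a b :: nat by presburger
    show "x = y" using eq ne[of x y] ne[of y x] unfolding f_def by (simp split: if_splits)
  qed
  have img: "f ` fst G = fst (disj_union (induced G S) (induced G (fst G - S)))"
  proof -
    have "fst G = S \<union> (fst G - S)" using S by blast
    then have "f ` fst G = f ` S \<union> f ` (fst G - S)" by (metis image_Un)
    also have "f ` S = (\<lambda>v. 2 * v) ` S" by (simp add: f_def)
    also have "f ` (fst G - S) = (\<lambda>v. 2 * v + 1) ` (fst G - S)" by (simp add: f_def)
    finally show ?thesis by (simp add: disj_union_def induced_def)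
  qed
  have bij: "bij_betw f (fst G) (fst (disj_union (induced G S) (induced G (fst G - S))))"
    using inj img by (simp add: bij_betw_def)
  have i2: "inj (\<lambda>v::nat. 2 * v)" "inj (\<lambda>v::nat. 2 * v + 1)" by (auto simp: inj_def)
  have ne: "2 * a \<noteq> 2 * b + 1" for a b :: nat by presburger
  have fS: "f u = 2 * u" if "u \<in> S" for u using that by (simp add: f_def)
  have fT: "f u = 2 * u + 1" if "u \<notin> S" for u using that by (simp add: f_def)
  have inS: "u \<in> S" if "f u = 2 * a" for u a
  proof (rule ccontr)
    assume "u \<notin> S" then have "f u = 2 * u + 1" by (rule fT)
    with that ne show False by metis
  qed
  have inT: "u \<notin> S" if "f u = 2 * a + 1" for u a
  proof
    assume "u \<in> S" then have "f u = 2 * u" by (rule fS)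
    with that ne show False by metis
  qed
  let ?D = "disj_union (induced G S) (induced G (fst G - S))"
  have sndD: "snd ?D = (\<lambda>e. (\<lambda>v. 2 * v) ` e) ` snd (induced G S) \<union> (\<lambda>e. (\<lambda>v. 2 * v + 1) ` e) ` snd (induced G (fst G - S))"
    by (simp only: disj_union_def snd_conv)
  have edges: "{u, v} \<in> snd G \<longleftrightarrow> {f u, f v} \<in> snd ?D"
    if u: "u \<in> fst G" and v: "v \<in> fst G" for u v
  proof
    assume e: "{u, v} \<in> snd G"
    then have "{u,v} \<subseteq> S \<or> {u,v} \<subseteq> fst G - S" using noc by (rule bspec[rotated])
    then show "{f u, f v} \<in> snd ?D"
    proof
      assume a: "{u,v} \<subseteq> S"
      then have "{u,v} \<in> snd (induced G S)" using e by (simp add: induced_def)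
      then have "(\<lambda>v. 2 * v) ` {u,v} \<in> (\<lambda>e. (\<lambda>v. 2 * v) ` e) ` snd (induced G S)" by (rule imageI)
      moreover have "{f u, f v} = (\<lambda>v. 2 * v) ` {u,v}" using a fS by simp
      ultimately show ?thesis unfolding sndD by (metis UnI1)
    next
      assume a: "{u,v} \<subseteq> fst G - S"
      then have "{u,v} \<in> snd (induced G (fst G - S))" using e by (simp add: induced_def)
      then have "(\<lambda>v. 2 * v + 1) ` {u,v} \<in> (\<lambda>e. (\<lambda>v. 2 * v + 1) ` e) ` snd (induced G (fst G - S))" by (rule imageI)
      moreover have "{f u, f v} = (\<lambda>v. 2 * v + 1) ` {u,v}" using a fT by simp
      ultimately show ?thesis unfolding sndD by (metis UnI2)
    qed
  next
    assume "{f u, f v} \<in> snd ?D"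
    then show "{u, v} \<in> snd G"
    proof (unfold sndD, elim UnE imageE)
      fix e assume eq: "{f u, f v} = (\<lambda>v. 2 * v) ` e" and e: "e \<in> snd (induced G S)"
      have "f u \<in> (\<lambda>v. 2 * v) ` e" "f v \<in> (\<lambda>v. 2 * v) ` e" unfolding eq[symmetric] by simp_all
      then obtain a b where "f u = 2 * a" "f v = 2 * b" by (elim imageE) 
      then have "u \<in> S" "v \<in> S" using inS by simp_all
      then have "{f u, f v} = (\<lambda>v. 2 * v) ` {u,v}" using fS by simp
      then have "{u,v} = e" using eq i2(1) by (metis inj_image_eq_iff)
      then show ?thesis using e by (simp add: induced_def)
    next
      fix e assume eq: "{f u, f v} = (\<lambda>v. 2 * v + 1) ` e" and e: "e \<in> snd (induced G (fst G - S))"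
      have "f u \<in> (\<lambda>v. 2 * v + 1) ` e" "f v \<in> (\<lambda>v. 2 * v + 1) ` e" unfolding eq[symmetric] by simp_all
      then obtain a b where "f u = 2 * a + 1" "f v = 2 * b + 1" by (elim imageE) 
      then have "u \<notin> S" "v \<notin> S" using inT by simp_all
      then have "{f u, f v} = (\<lambda>v. 2 * v + 1) ` {u,v}" using fT by simp
      then have "{u,v} = e" using eq i2(2) by (metis inj_image_eq_iff)
      then show ?thesis using e by (simp add: induced_def)
    qed
  qed
  show ?thesis unfolding graph_iso_def using bij edges by blast
qed


lemma induced_induced: "S \<subseteq> T \<Longrightarrow> induced (induced G T) S = induced G S"
  unfolding induced_def by auto

lemma wf_disj_union:
  assumes G: "wf_graph G" and H: "wf_graph H"
  shows "wf_graph (disj_union G H)"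
proof -
  have fin: "finite (fst (disj_union G H))"
    using G H by (simp add: wf_graph_def disj_union_def)
  have ed: "\<exists>u v. u \<in> fst (disj_union G H) \<and> v \<in> fst (disj_union G H) \<and> u \<noteq> v \<and> e' = {u, v}"
    if e': "e' \<in> snd (disj_union G H)" for e'
  proof -
    from e' consider e where "e \<in> snd G" "e' = (\<lambda>v. 2 * v) ` e"
      | e where "e \<in> snd H" "e' = (\<lambda>v. 2 * v + 1) ` e"
      unfolding disj_union_def snd_conv by (elim UnE imageE) auto
    then show ?thesis
    proof cases
      case 1
      then obtain u v where uv: "u \<in> fst G" "v \<in> fst G" "u \<noteq> v" "e = {u, v}"
        using G unfolding wf_graph_def by meson
      have "2 * u \<in> fst (disj_union G H)" "2 * v \<in> fst (disj_union G H)"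
        using uv by (simp_all add: disj_union_def)
      moreover have "e' = {2 * u, 2 * v}" using 1 uv by simp
      moreover have "2 * u \<noteq> 2 * v" using uv by simp
      ultimately show ?thesis by metis
    next
      case 2
      then obtain u v where uv: "u \<in> fst H" "v \<in> fst H" "u \<noteq> v" "e = {u, v}"
        using H unfolding wf_graph_def by meson
      have "2 * u + 1 \<in> fst (disj_union G H)" "2 * v + 1 \<in> fst (disj_union G H)"
        using uv by (simp_all add: disj_union_def)
      moreover have "e' = {2 * u + 1, 2 * v + 1}" using 2 uv by simp
      moreover have "2 * u + 1 \<noteq> 2 * v + 1" using uv by simp
      ultimately show ?thesis by metis
    qed
  qed
  show ?thesis unfolding wf_graph_def using fin ed by blast
qed

lemma p_split:
  fixes p :: "graph \<Rightarrow> nat"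
  assumes p_iso: "\<And>G H. wf_graph G \<Longrightarrow> wf_graph H \<Longrightarrow> graph_iso G H \<Longrightarrow> p G = p H"
    and p_union: "\<And>G H. wf_graph G \<Longrightarrow> wf_graph H \<Longrightarrow> p (disj_union G H) = max (p G) (p H)"
    and wf: "wf_graph G" and S: "S \<subseteq> fst G"
    and noc: "\<forall>e\<in>snd G. e \<subseteq> S \<or> e \<subseteq> fst G - S"
  shows "p G = max (p (induced G S)) (p (induced G (fst G - S)))"
proof -
  have w1: "wf_graph (induced G S)" using wf S by (rule wf_induced)
  have w2: "wf_graph (induced G (fst G - S))" using wf by (rule wf_induced) auto
  have "p G = p (disj_union (induced G S) (induced G (fst G - S)))"
    using p_iso[OF wf wf_disj_union[OF w1 w2] iso_split[OF wf S noc]] .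
  also have "\<dots> = max (p (induced G S)) (p (induced G (fst G - S)))"
    using p_union[OF w1 w2] .
  finally show ?thesis .
qed

lemma p_parts:
  fixes p :: "graph \<Rightarrow> nat"
  assumes p_iso: "\<And>G H. wf_graph G \<Longrightarrow> wf_graph H \<Longrightarrow> graph_iso G H \<Longrightarrow> p G = p H"
    and p_union: "\<And>G H. wf_graph G \<Longrightarrow> wf_graph H \<Longrightarrow> p (disj_union G H) = max (p G) (p H)"
    and wf: "wf_graph G" and fin: "finite I" and ne: "I \<noteq> {}"
    and q: "\<forall>v\<in>fst G. q v \<in> I"
    and noc: "\<forall>e\<in>snd G. \<forall>u\<in>e. \<forall>v\<in>e. q u = q v"
    and bound: "\<forall>i\<in>I. p (induced G {v\<in>fst G. q v = i}) \<le> k"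
  shows "p G \<le> k"
proof -
  have main: "p (induced G {v \<in> fst G. q v \<in> J}) \<le> k" if "finite J" "J \<noteq> {}" "J \<subseteq> I" for J
    using that
  proof (induction J rule: finite_ne_induct)
    case (singleton i)
    have "{v \<in> fst G. q v \<in> {i}} = {v \<in> fst G. q v = i}" by simp
    then show ?case using bound singleton by simp
  next
    case (insert i J)
    define T where "T = {v \<in> fst G. q v \<in> insert i J}"
    define S where "S = {v \<in> fst G. q v \<in> J}"
    define H where "H = induced G T"
    have wH: "wf_graph H" unfolding H_def T_def by (rule wf_induced[OF wf]) auto
    have fH: "fst H = T" by (simp add: H_def induced_def)
    have ST: "S \<subseteq> T" unfolding S_def T_def by auto
    have SH: "S \<subseteq> fst H" using ST fH by simp
    have rest: "fst H - S = {v \<in> fst G. q v = i}" using insert.hyps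
      unfolding fH S_def T_def by auto
    have nocH: "\<forall>e\<in>snd H. e \<subseteq> S \<or> e \<subseteq> fst H - S"
    proof
      fix e assume e: "e \<in> snd H"
      then have eG: "e \<in> snd G" and eT: "e \<subseteq> T" by (simp_all add: H_def induced_def)
      show "e \<subseteq> S \<or> e \<subseteq> fst H - S"
      proof (cases "\<exists>u\<in>e. q u \<in> J")
        case True
        then obtain u where u: "u \<in> e" "q u \<in> J" by blast
        have "\<forall>v\<in>e. q v = q u" using noc eG u(1) by metis
        then have "e \<subseteq> S" using eT u(2) unfolding S_def T_def by auto
        then show ?thesis ..
      next
        case False
        then have "e \<subseteq> fst H - S" using eT fH unfolding S_def by auto
        then show ?thesis ..
      qed
    qed
    have "p H = max (p (induced H S)) (p (induced H (fst H - S)))"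
      by (rule p_split[OF p_iso p_union wH SH nocH])
    also have "induced H S = induced G S" unfolding H_def using ST by (rule induced_induced)
    also have "induced H (fst H - S) = induced G {v \<in> fst G. q v = i}"
      unfolding rest unfolding H_def by (rule induced_induced) (auto simp: T_def)
    finally have "p H = max (p (induced G S)) (p (induced G {v \<in> fst G. q v = i}))" .
    moreover have "p (induced G S) \<le> k" unfolding S_def using insert by simp
    moreover have "p (induced G {v \<in> fst G. q v = i}) \<le> k" using bound insert by simp
    ultimately show ?case unfolding H_def T_def by (simp add: max.bounded_iff)
  qed
  have "{v \<in> fst G. q v \<in> I} = fst G" using q by auto
  then show ?thesis using main[OF fin ne order_refl] induced_all[OF wf] by simp
qed



definition enc :: "nat \<Rightarrow> nat \<Rightarrow> nat" where "enc i v = prod_encode (i, v)"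

definition gmap :: "nat set \<Rightarrow> nat list \<Rightarrow> nat list" where
  "gmap X xs = map (\<lambda>x. if x \<in> X then hd (filter (\<lambda>y. y \<notin> X) xs) else x) xs"

definition Tset :: "nat set \<Rightarrow> nat set \<Rightarrow> nat \<Rightarrow> nat list set" where
  "Tset V X m = {xs \<in> tuples V m. set xs \<inter> X = {} \<or> \<not> set xs \<subseteq> X}"

definition coef :: "rat \<Rightarrow> nat set \<Rightarrow> nat list \<Rightarrow> rat" where
  "coef d X xs = (if set xs \<inter> X = {} then 1 else d)"

definition phi :: "nat \<Rightarrow> nat set \<Rightarrow> nat list \<Rightarrow> nat list" where
  "phi i X xs = map (enc i) (gmap X xs)"

definition Dom :: "nat set \<Rightarrow> nat \<Rightarrow> (nat \<Rightarrow> nat set) \<Rightarrow> nat set" where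
  "Dom V n Xf = (\<Union>i<n. enc i ` (V - Xf i))"

definition Bsfn :: "'s vstruct \<Rightarrow> nat \<Rightarrow> (nat \<Rightarrow> nat set) \<Rightarrow> (nat \<Rightarrow> rat) \<Rightarrow> rat \<Rightarrow> 's \<Rightarrow> nat list \<Rightarrow> rat" where
  "Bsfn A n Xf c d f ys = (\<Sum>i<n. \<Sum>xs \<in> {xs \<in> Tset (sdom A) (Xf i) (ar A f). phi i (Xf i) xs = ys}.
      c i * coef d (Xf i) xs * sfn A f xs)"

definition Bst :: "'s vstruct \<Rightarrow> nat \<Rightarrow> (nat \<Rightarrow> nat set) \<Rightarrow> (nat \<Rightarrow> rat) \<Rightarrow> rat \<Rightarrow> 's vstruct" where
  "Bst A n Xf c d = \<lparr>syms = syms A, ar = ar A, sdom = Dom (sdom A) n Xf, sfn = Bsfn A n Xf c d\<rparr>"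

lemma finite_tuples: "finite V \<Longrightarrow> finite (tuples V m)"
  unfolding tuples_def by (rule finite_lists_length_eq)

lemma finite_Tset: "finite V \<Longrightarrow> finite (Tset V X m)"
  unfolding Tset_def using finite_tuples by simp

lemma Tset_sub: "Tset V X m \<subseteq> tuples V m"
  unfolding Tset_def by auto

lemma gmap_id: "set xs \<inter> X = {} \<Longrightarrow> gmap X xs = xs"
  unfolding gmap_def by (rule map_idI) auto

lemma set_gmap:
  assumes "set xs \<inter> X = {} \<or> \<not> set xs \<subseteq> X"
  shows "set (gmap X xs) = set xs - X"
proof (cases "set xs \<inter> X = {}")
  case True
  then show ?thesis by (auto simp: gmap_id)
next
  case False
  then have ex: "\<exists>y\<in>set xs. y \<notin> X" using assms by blast
  define u where "u = hd (filter (\<lambda>y. y \<notin> X) xs)"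
  have "filter (\<lambda>y. y \<notin> X) xs \<noteq> []" using ex by (simp add: filter_empty_conv)
  then have "u \<in> set (filter (\<lambda>y. y \<notin> X) xs)" unfolding u_def by (rule hd_in_set)
  then have u: "u \<in> set xs" "u \<notin> X" by auto
  have "set (gmap X xs) = (\<lambda>x. if x \<in> X then u else x) ` set xs"
    unfolding gmap_def u_def by simp
  also have "\<dots> = set xs - X" using u False by (auto simp: image_iff) 
  finally show ?thesis .
qed

lemma length_gmap[simp]: "length (gmap X xs) = length xs"
  unfolding gmap_def by simp

lemma set_phi:
  assumes "xs \<in> Tset V X m"
  shows "set (phi i X xs) = enc i ` (set xs - X)"
  using assms set_gmap[of xs X] unfolding phi_def Tset_def by simp

lemma phi_tuples:
  assumes "xs \<in> Tset V (Xf i) m" "i < n"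
  shows "phi i (Xf i) xs \<in> tuples (Dom V n Xf) m"
proof -
  have "set xs \<subseteq> V" "length xs = m" using assms(1) by (auto simp: Tset_def tuples_def)
  then have "set (phi i (Xf i) xs) \<subseteq> Dom V n Xf"
    unfolding set_phi[OF assms(1)] Dom_def using assms(2) by blast
  moreover have "length (phi i (Xf i) xs) = m" using \<open>length xs = m\<close> by (simp add: phi_def)
  ultimately show ?thesis by (simp add: tuples_def)
qed

lemma finite_Dom: "finite V \<Longrightarrow> finite (Dom V n Xf)"
  unfolding Dom_def by auto

lemma enc_inj: "enc i u = enc j v \<longleftrightarrow> i = j \<and> u = v"
  by (simp add: enc_def)

lemma regroup:
  fixes F :: "nat list \<Rightarrow> real"
  assumes fin: "finite (sdom A)"
  shows "(\<Sum>ys\<in>tuples (Dom (sdom A) n Xf) (ar A f). real_of_rat (Bsfn A n Xf c d f ys) * F ys)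
    = (\<Sum>i<n. \<Sum>xs\<in>Tset (sdom A) (Xf i) (ar A f).
         real_of_rat (c i * coef d (Xf i) xs * sfn A f xs) * F (phi i (Xf i) xs))"
proof -
  let ?D = "Dom (sdom A) n Xf"
  let ?T = "\<lambda>i. Tset (sdom A) (Xf i) (ar A f)"
  let ?a = "\<lambda>i xs. real_of_rat (c i * coef d (Xf i) xs * sfn A f xs)"
  have "(\<Sum>ys\<in>tuples ?D (ar A f). real_of_rat (Bsfn A n Xf c d f ys) * F ys)
      = (\<Sum>ys\<in>tuples ?D (ar A f). \<Sum>i<n. \<Sum>xs \<in> {xs \<in> ?T i. phi i (Xf i) xs = ys}. ?a i xs * F ys)"
    unfolding Bsfn_def by (simp add: of_rat_sum sum_distrib_right)
  also have "\<dots> = (\<Sum>i<n. \<Sum>ys\<in>tuples ?D (ar A f). \<Sum>xs \<in> {xs \<in> ?T i. phi i (Xf i) xs = ys}. ?a i xs * F ys)"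
    by (rule sum.swap)
  also have "\<dots> = (\<Sum>i<n. \<Sum>ys\<in>tuples ?D (ar A f). \<Sum>xs \<in> {xs \<in> ?T i. phi i (Xf i) xs = ys}. ?a i xs * F (phi i (Xf i) xs))"
    by (intro sum.cong refl) auto
  also have "\<dots> = (\<Sum>i<n. \<Sum>xs\<in>?T i. ?a i xs * F (phi i (Xf i) xs))"
  proof (rule sum.cong[OF refl])
    fix i assume i: "i \<in> {..<n}"
    have fS: "finite (?T i)" using fin by (simp add: finite_Tset)
    have fT: "finite (tuples ?D (ar A f))" using fin by (simp add: finite_tuples finite_Dom)
    have img: "phi i (Xf i) ` ?T i \<subseteq> tuples ?D (ar A f)" using i by (auto intro: phi_tuples)
    show "(\<Sum>ys\<in>tuples ?D (ar A f). \<Sum>xs \<in> {xs \<in> ?T i. phi i (Xf i) xs = ys}. ?a i xs * F (phi i (Xf i) xs))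
        = (\<Sum>xs\<in>?T i. ?a i xs * F (phi i (Xf i) xs))"
      by (rule sum.group[OF fS fT img])
  qed
  finally show ?thesis .
qed


definition val :: "'s vstruct \<Rightarrow> 's vstruct \<Rightarrow> (nat \<Rightarrow> nat) \<Rightarrow> real" where
  "val A C h = (\<Sum>f\<in>syms A. \<Sum>xs\<in>tuples (sdom A) (ar A f). real_of_rat (sfn A f xs * sfn C f (map h xs)))"

lemma opt_val: "opt A C = Max (val A C ` (sdom A \<rightarrow>\<^sub>E sdom C))"
  by (simp add: opt_def val_def)

lemma val_le_opt:
  assumes "finite (sdom A)" "finite (sdom C)" "h \<in> sdom A \<rightarrow>\<^sub>E sdom C"
  shows "val A C h \<le> opt A C"
  unfolding opt_val using assms by (intro Max_ge) (auto intro: finite_PiE)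

lemma opt_attained:
  assumes "finite (sdom A)" "finite (sdom C)" "sdom C \<noteq> {}"
  shows "\<exists>h\<in>sdom A \<rightarrow>\<^sub>E sdom C. opt A C = val A C h"
proof -
  have ne: "sdom A \<rightarrow>\<^sub>E sdom C \<noteq> {}" using assms(3) by (simp add: PiE_eq_empty_iff)
  have "opt A C \<in> val A C ` (sdom A \<rightarrow>\<^sub>E sdom C)"
    unfolding opt_val using assms ne by (intro Max_in) (auto intro: finite_PiE)
  then show ?thesis by auto
qed

lemma map_tuples:
  assumes "xs \<in> tuples V m" "h \<in> V \<rightarrow>\<^sub>E W"
  shows "map h xs \<in> tuples W m"
  using assms unfolding tuples_def by auto

lemma term_nonneg:
  assumes A: "is_struct A" and C: "is_struct C" and sig: "same_sig C A"
    and f: "f \<in> syms A" and xs: "xs \<in> tuples (sdom A) (ar A f)" and h: "h \<in> sdom A \<rightarrow>\<^sub>E sdom C"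
  shows "0 \<le> real_of_rat (sfn A f xs * sfn C f (map h xs))"
proof -
  have fC: "f \<in> syms C" "ar C f = ar A f" using sig f by (auto simp: same_sig_def)
  have "map h xs \<in> tuples (sdom C) (ar C f)" using map_tuples[OF xs h] fC by simp
  then have "0 \<le> sfn C f (map h xs)" using C fC unfolding is_struct_def by blast
  moreover have "0 \<le> sfn A f xs" using A f xs unfolding is_struct_def by blast
  ultimately show ?thesis by simp
qed

lemma partial_le_val:
  assumes A: "is_struct A" and C: "is_struct C" and sig: "same_sig C A"
    and h: "h \<in> sdom A \<rightarrow>\<^sub>E sdom C"
    and g: "\<And>f xs. f \<in> syms A \<Longrightarrow> xs \<in> tuples (sdom A) (ar A f) \<Longrightarrow>
               g f xs \<le> real_of_rat (sfn A f xs * sfn C f (map h xs))"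
    and g0: "\<And>f xs. f \<in> syms A \<Longrightarrow> xs \<in> tuples (sdom A) (ar A f) \<Longrightarrow> 0 \<le> g f xs"
    and S: "\<And>f. S f \<subseteq> tuples (sdom A) (ar A f)"
  shows "(\<Sum>f\<in>syms A. \<Sum>xs\<in>S f. g f xs) \<le> val A C h"
  unfolding val_def
proof (rule sum_mono)
  fix f assume f: "f \<in> syms A"
  have fin: "finite (tuples (sdom A) (ar A f))" using A by (simp add: is_struct_def finite_tuples)
  have "(\<Sum>xs\<in>S f. g f xs) \<le> (\<Sum>xs\<in>tuples (sdom A) (ar A f). g f xs)"
    by (rule sum_mono2[OF fin S]) (use g0 f S in auto)
  also have "\<dots> \<le> (\<Sum>xs\<in>tuples (sdom A) (ar A f). real_of_rat (sfn A f xs * sfn C f (map h xs)))"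
    by (rule sum_mono) (rule g[OF f])
  finally show "(\<Sum>xs\<in>S f. g f xs) \<le> (\<Sum>xs\<in>tuples (sdom A) (ar A f). real_of_rat (sfn A f xs * sfn C f (map h xs)))" .
qed

lemma term_le_val:
  assumes A: "is_struct A" and C: "is_struct C" and sig: "same_sig C A"
    and f: "f \<in> syms A" and xs: "xs \<in> tuples (sdom A) (ar A f)" and h: "h \<in> sdom A \<rightarrow>\<^sub>E sdom C"
  shows "real_of_rat (sfn A f xs * sfn C f (map h xs)) \<le> val A C h"
proof -
  let ?g = "\<lambda>f' ys. real_of_rat (sfn A f' ys * sfn C f' (map h ys))"
  let ?S = "\<lambda>f'. if f' = f then {xs} else {}"
  have "(\<Sum>f'\<in>syms A. \<Sum>ys\<in>?S f'. ?g f' ys) \<le> val A C h"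
    by (rule partial_le_val[OF A C sig h]) (use term_nonneg[OF A C sig _ _ h] xs in auto)
  moreover have "(\<Sum>f'\<in>syms A. \<Sum>ys\<in>?S f'. ?g f' ys) = (\<Sum>f'\<in>syms A. if f' = f then ?g f xs else 0)"
    by (rule sum.cong) auto
  moreover have "\<dots> = ?g f xs"
    using f A by (simp add: is_struct_def)
  ultimately show ?thesis by simp
qed


lemma enc_Dom: "i < n \<Longrightarrow> x \<in> V \<Longrightarrow> x \<notin> Xf i \<Longrightarrow> enc i x \<in> Dom V n Xf"
  unfolding Dom_def by blast

lemma val_nonneg:
  assumes A: "is_struct A" and C: "is_struct C" and sig: "same_sig C A" and h: "h \<in> sdom A \<rightarrow>\<^sub>E sdom C"
  shows "0 \<le> val A C h"
  unfolding val_def by (intro sum_nonneg) (rule term_nonneg[OF A C sig _ _ h])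

lemma opt_nonneg:
  assumes A: "is_struct A" and C: "is_struct C" and sig: "same_sig C A"
  shows "0 \<le> opt A C"
proof -
  obtain h where h: "h \<in> sdom A \<rightarrow>\<^sub>E sdom C" "opt A C = val A C h"
    using opt_attained[of A C] A C by (auto simp: is_struct_def)
  then show ?thesis using val_nonneg[OF A C sig h(1)] by simp
qed

lemma UB:
  assumes A: "is_struct A" and C: "is_struct C" and sig: "same_sig C A"
    and i: "i < n" and d: "0 \<le> d" and H: "H \<in> Dom (sdom A) n Xf \<rightarrow>\<^sub>E sdom C"
  shows "(\<Sum>f\<in>syms A. \<Sum>xs\<in>Tset (sdom A) (Xf i) (ar A f).
            real_of_rat (coef d (Xf i) xs * sfn A f xs) * real_of_rat (sfn C f (map H (phi i (Xf i) xs))))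
         \<le> (1 + real_of_rat d * real (\<Sum>f\<in>syms A. card (tuples (sdom A) (ar A f)))) * opt A C"
proof -
  let ?V = "sdom A" let ?X = "Xf i"
  let ?T = "\<lambda>f. Tset ?V ?X (ar A f)"
  let ?t = "\<lambda>f xs. real_of_rat (coef d ?X xs * sfn A f xs) * real_of_rat (sfn C f (map H (phi i ?X xs)))"
  let ?N = "\<Sum>f\<in>syms A. card (tuples (sdom A) (ar A f))"
  let ?o = "opt A C"
  have finA: "finite ?V" and finC: "finite (sdom C)" and neC: "sdom C \<noteq> {}"
    using A C by (auto simp: is_struct_def)
  obtain c0 where c0: "c0 \<in> sdom C" using neC by blast
  define h0 where "h0 = restrict (\<lambda>x. if x \<in> ?X then c0 else H (enc i x)) ?V"
  have h0: "h0 \<in> ?V \<rightarrow>\<^sub>E sdom C"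
    unfolding h0_def using c0 H enc_Dom[OF i] by (auto simp: PiE_iff)
  have o0: "0 \<le> ?o" by (rule opt_nonneg[OF A C sig])
  define g0 where "g0 f xs = (if set xs \<inter> ?X = {} then real_of_rat (sfn A f xs * sfn C f (map h0 xs)) else 0)" for f xs
  define g1 where "g1 xs = (if set xs \<inter> ?X = {} then 0 else real_of_rat d * ?o)" for xs :: "nat list"
  have pt: "?t f xs \<le> g0 f xs + g1 xs" if f: "f \<in> syms A" and xs: "xs \<in> ?T f" for f xs
  proof (cases "set xs \<inter> ?X = {}")
    case True
    have sub: "set xs \<subseteq> ?V" using xs by (auto simp: Tset_def tuples_def)
    have "map H (phi i ?X xs) = map h0 xs"
      unfolding phi_def gmap_id[OF True] using sub True by (auto simp: h0_def)
    then have "?t f xs = g0 f xs" using True by (simp add: g0_def coef_def of_rat_mult)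
    then show ?thesis using True by (simp add: g1_def)
  next
    case False
    have xsT: "xs \<in> tuples ?V (ar A f)" and sub: "set xs \<subseteq> ?V" and ns: "\<not> set xs \<subseteq> ?X"
      using xs False by (auto simp: Tset_def tuples_def)
    define u where "u = hd (filter (\<lambda>y. y \<notin> ?X) xs)"
    have "filter (\<lambda>y. y \<notin> ?X) xs \<noteq> []" using ns by (auto simp: filter_empty_conv)
    then have "u \<in> set (filter (\<lambda>y. y \<notin> ?X) xs)" unfolding u_def by (rule hd_in_set)
    then have u: "u \<in> set xs" "u \<notin> ?X" by auto
    define hx where "hx = restrict (\<lambda>x. if x \<in> ?X then H (enc i u) else H (enc i x)) ?V"
    have hx: "hx \<in> ?V \<rightarrow>\<^sub>E sdom C"
      unfolding hx_def using H enc_Dom[OF i] u sub by (auto simp: PiE_iff)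
    have "map H (phi i ?X xs) = map hx xs"
      unfolding phi_def gmap_def u_def[symmetric] using sub by (auto simp: hx_def)
    then have "?t f xs = real_of_rat d * real_of_rat (sfn A f xs * sfn C f (map hx xs))"
      using False by (simp add: coef_def of_rat_mult)
    also have "\<dots> \<le> real_of_rat d * ?o"
    proof (rule mult_left_mono)
      show "real_of_rat (sfn A f xs * sfn C f (map hx xs)) \<le> ?o"
        using term_le_val[OF A C sig f xsT hx] val_le_opt[OF finA finC hx] by linarith
      show "0 \<le> real_of_rat d" using d by simp
    qed
    finally show ?thesis using False by (simp add: g0_def g1_def)
  qed
  have "(\<Sum>f\<in>syms A. \<Sum>xs\<in>?T f. ?t f xs) \<le> (\<Sum>f\<in>syms A. \<Sum>xs\<in>?T f. g0 f xs + g1 xs)"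
    by (intro sum_mono pt)
  also have "\<dots> = (\<Sum>f\<in>syms A. \<Sum>xs\<in>?T f. g0 f xs) + (\<Sum>f\<in>syms A. \<Sum>xs\<in>?T f. g1 xs)"
    by (simp add: sum.distrib)
  also have "(\<Sum>f\<in>syms A. \<Sum>xs\<in>?T f. g0 f xs) \<le> val A C h0"
  proof (rule partial_le_val[OF A C sig h0])
    fix f xs assume f: "f \<in> syms A" and xs: "xs \<in> tuples (sdom A) (ar A f)"
    show "g0 f xs \<le> real_of_rat (sfn A f xs * sfn C f (map h0 xs))"
      using term_nonneg[OF A C sig f xs h0] by (simp add: g0_def)
    show "0 \<le> g0 f xs"
      using term_nonneg[OF A C sig f xs h0] by (simp add: g0_def)
  next
    show "\<And>f. ?T f \<subseteq> tuples (sdom A) (ar A f)" by (rule Tset_sub)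
  qed
  also have "val A C h0 \<le> ?o" by (rule val_le_opt[OF finA finC h0])
  also have "(\<Sum>f\<in>syms A. \<Sum>xs\<in>?T f. g1 xs) \<le> (\<Sum>f\<in>syms A. real (card (tuples ?V (ar A f))) * (real_of_rat d * ?o))"
  proof (rule sum_mono)
    fix f assume f: "f \<in> syms A"
    have "(\<Sum>xs\<in>?T f. g1 xs) \<le> (\<Sum>xs\<in>?T f. real_of_rat d * ?o)"
      by (rule sum_mono) (use d o0 in \<open>simp add: g1_def\<close>)
    also have "\<dots> = real (card (?T f)) * (real_of_rat d * ?o)" by simp
    also have "\<dots> \<le> real (card (tuples ?V (ar A f))) * (real_of_rat d * ?o)"
    proof (rule mult_right_mono)
      show "real (card (?T f)) \<le> real (card (tuples ?V (ar A f)))"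
        using card_mono[OF finite_tuples[OF finA] Tset_sub] by simp
      show "0 \<le> real_of_rat d * ?o" using d o0 by simp
    qed
    finally show "(\<Sum>xs\<in>?T f. g1 xs) \<le> real (card (tuples ?V (ar A f))) * (real_of_rat d * ?o)" .
  qed
  also have "(\<Sum>f\<in>syms A. real (card (tuples ?V (ar A f))) * (real_of_rat d * ?o)) = real ?N * (real_of_rat d * ?o)"
    by (simp add: sum_distrib_right)
  finally show ?thesis by (simp add: algebra_simps)
qed


lemma Bst_simps[simp]: "syms (Bst A n Xf c d) = syms A" "ar (Bst A n Xf c d) = ar A"
  "sdom (Bst A n Xf c d) = Dom (sdom A) n Xf" "sfn (Bst A n Xf c d) = Bsfn A n Xf c d"
  by (simp_all add: Bst_def)

lemma valB_eq:
  assumes fin: "finite (sdom A)"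
  shows "val (Bst A n Xf c d) C H = (\<Sum>i<n. real_of_rat (c i) *
     (\<Sum>f\<in>syms A. \<Sum>xs\<in>Tset (sdom A) (Xf i) (ar A f).
        real_of_rat (coef d (Xf i) xs * sfn A f xs) * real_of_rat (sfn C f (map H (phi i (Xf i) xs)))))"
proof -
  have "val (Bst A n Xf c d) C H = (\<Sum>f\<in>syms A. \<Sum>ys\<in>tuples (Dom (sdom A) n Xf) (ar A f).
      real_of_rat (Bsfn A n Xf c d f ys) * real_of_rat (sfn C f (map H ys)))"
    by (simp add: val_def of_rat_mult)
  also have "\<dots> = (\<Sum>f\<in>syms A. \<Sum>i<n. \<Sum>xs\<in>Tset (sdom A) (Xf i) (ar A f).
         real_of_rat (c i * coef d (Xf i) xs * sfn A f xs) * real_of_rat (sfn C f (map H (phi i (Xf i) xs))))"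
    by (rule sum.cong[OF refl]) (rule regroup[OF fin])
  also have "\<dots> = (\<Sum>i<n. \<Sum>f\<in>syms A. \<Sum>xs\<in>Tset (sdom A) (Xf i) (ar A f).
         real_of_rat (c i) * (real_of_rat (coef d (Xf i) xs * sfn A f xs) * real_of_rat (sfn C f (map H (phi i (Xf i) xs)))))"
    by (simp only: of_rat_mult mult.assoc) (rule sum.swap)
  finally show ?thesis by (simp add: sum_distrib_left)
qed


lemma optB_upper:
  assumes A: "is_struct A" and C: "is_struct C" and sig: "same_sig C A"
    and d: "0 \<le> d" and c: "\<forall>i<n. 0 \<le> c i"
  shows "opt (Bst A n Xf c d) C \<le> (\<Sum>i<n. real_of_rat (c i)) *
      ((1 + real_of_rat d * real (\<Sum>f\<in>syms A. card (tuples (sdom A) (ar A f)))) * opt A C)"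
proof -
  let ?K = "(1 + real_of_rat d * real (\<Sum>f\<in>syms A. card (tuples (sdom A) (ar A f)))) * opt A C"
  have finA: "finite (sdom A)" and finC: "finite (sdom C)" and neC: "sdom C \<noteq> {}"
    using A C by (auto simp: is_struct_def)
  have finD: "finite (Dom (sdom A) n Xf)" using finA by (rule finite_Dom)
  have ne: "Dom (sdom A) n Xf \<rightarrow>\<^sub>E sdom C \<noteq> {}" using neC by (simp add: PiE_eq_empty_iff)
  have "val (Bst A n Xf c d) C H \<le> (\<Sum>i<n. real_of_rat (c i)) * ?K"
    if H: "H \<in> Dom (sdom A) n Xf \<rightarrow>\<^sub>E sdom C" for H
  proof -
    have "val (Bst A n Xf c d) C H \<le> (\<Sum>i<n. real_of_rat (c i) * ?K)"
      unfolding valB_eq[OF finA]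
    proof (rule sum_mono)
      fix i assume i: "i \<in> {..<n}"
      show "real_of_rat (c i) * (\<Sum>f\<in>syms A. \<Sum>xs\<in>Tset (sdom A) (Xf i) (ar A f).
          real_of_rat (coef d (Xf i) xs * sfn A f xs) * real_of_rat (sfn C f (map H (phi i (Xf i) xs))))
          \<le> real_of_rat (c i) * ?K"
        by (rule mult_left_mono[OF UB[OF A C sig _ d H]]) (use i c in auto)
    qed
    then show ?thesis by (simp add: sum_distrib_right)
  qed
  then show ?thesis
    unfolding opt_val Bst_simps using finD finC ne
    by (intro Max.boundedI) (auto intro: finite_PiE)
qed

lemma sum_filter_mult:
  fixes a :: "nat \<Rightarrow> real"
  shows "(\<Sum>i\<in>{i\<in>{..<n}. P i}. a i) * t = (\<Sum>i<n. a i * (if P i then t else 0))"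
proof -
  have "(\<Sum>i\<in>{i\<in>{..<n}. P i}. a i) = (\<Sum>i<n. if P i then a i else 0)"
    by (rule sum.inter_filter) simp
  then show ?thesis by (auto simp: sum_distrib_right intro!: sum.cong)
qed

lemma optB_lower:
  assumes A: "is_struct A" and C: "is_struct C" and sig: "same_sig C A"
    and d: "0 \<le> d" and c: "\<forall>i<n. 0 \<le> c i"
    and L: "\<forall>f\<in>syms A. \<forall>xs\<in>tuples (sdom A) (ar A f).
              L0 \<le> (\<Sum>i\<in>{i\<in>{..<n}. set xs \<inter> Xf i = {}}. real_of_rat (c i))"
  shows "L0 * opt A C \<le> opt (Bst A n Xf c d) C"
proof -
  let ?V = "sdom A" let ?D = "Dom (sdom A) n Xf"
  have finA: "finite ?V" and finC: "finite (sdom C)" and neC: "sdom C \<noteq> {}"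
    using A C by (auto simp: is_struct_def)
  have finD: "finite ?D" using finA by (rule finite_Dom)
  obtain hs where hs: "hs \<in> ?V \<rightarrow>\<^sub>E sdom C" and ohs: "opt A C = val A C hs"
    using opt_attained[OF finA finC neC] by blast
  define Hs where "Hs = restrict (\<lambda>z. hs (snd (prod_decode z))) ?D"
  have Hs: "Hs \<in> ?D \<rightarrow>\<^sub>E sdom C"
    unfolding Hs_def Dom_def using hs by (auto simp: enc_def PiE_iff)
  let ?ts = "\<lambda>f xs. real_of_rat (sfn A f xs * sfn C f (map hs xs))"
  let ?e = "\<lambda>i f xs. if set xs \<inter> Xf i = {} then ?ts f xs else 0"
  have Ui: "(\<Sum>f\<in>syms A. \<Sum>xs\<in>tuples ?V (ar A f). ?e i f xs) \<le>
      (\<Sum>f\<in>syms A. \<Sum>xs\<in>Tset ?V (Xf i) (ar A f).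
        real_of_rat (coef d (Xf i) xs * sfn A f xs) * real_of_rat (sfn C f (map Hs (phi i (Xf i) xs))))"
    if i: "i < n" for i
  proof (rule sum_mono)
    fix f assume f: "f \<in> syms A"
    have fC: "f \<in> syms C" "ar C f = ar A f" using sig f by (auto simp: same_sig_def)
    have "(\<Sum>xs\<in>tuples ?V (ar A f). ?e i f xs) = (\<Sum>xs\<in>Tset ?V (Xf i) (ar A f). ?e i f xs)"
      by (rule sum.mono_neutral_right) (auto simp: Tset_def finite_tuples finA)
    also have "\<dots> \<le> (\<Sum>xs\<in>Tset ?V (Xf i) (ar A f).
        real_of_rat (coef d (Xf i) xs * sfn A f xs) * real_of_rat (sfn C f (map Hs (phi i (Xf i) xs))))"
    proof (rule sum_mono)
      fix xs assume xs: "xs \<in> Tset ?V (Xf i) (ar A f)"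
      have xsT: "xs \<in> tuples ?V (ar A f)" using xs Tset_sub by blast
      have wA: "0 \<le> sfn A f xs" using A f xsT by (auto simp: is_struct_def)
      have "map Hs (phi i (Xf i) xs) \<in> tuples (sdom C) (ar C f)"
        using map_tuples[OF phi_tuples[of xs "sdom A" Xf i "ar A f" n, OF xs i] Hs] fC by simp
      then have wC: "0 \<le> sfn C f (map Hs (phi i (Xf i) xs))" using C fC by (auto simp: is_struct_def)
      have co: "0 \<le> coef d (Xf i) xs" using d by (simp add: coef_def)
      show "?e i f xs \<le> real_of_rat (coef d (Xf i) xs * sfn A f xs) * real_of_rat (sfn C f (map Hs (phi i (Xf i) xs)))"
      proof (cases "set xs \<inter> Xf i = {}")
        case True
        have sub: "set xs \<subseteq> ?V" using xsT by (auto simp: tuples_def)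
        have inD: "enc i x \<in> ?D" if "x \<in> set xs" for x
          using enc_Dom[OF i, of x ?V Xf] sub True that by blast
        have "map Hs (phi i (Xf i) xs) = map hs xs"
          unfolding phi_def gmap_id[OF True] using inD
          by (auto simp: Hs_def enc_def)
        then show ?thesis using True by (simp add: coef_def of_rat_mult)
      next
        case False
        then show ?thesis using wA wC co by simp
      qed
    qed
    finally show "(\<Sum>xs\<in>tuples ?V (ar A f). ?e i f xs) \<le> (\<Sum>xs\<in>Tset ?V (Xf i) (ar A f).
        real_of_rat (coef d (Xf i) xs * sfn A f xs) * real_of_rat (sfn C f (map Hs (phi i (Xf i) xs))))" .
  qed
  have "L0 * opt A C = (\<Sum>f\<in>syms A. \<Sum>xs\<in>tuples ?V (ar A f). L0 * ?ts f xs)"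
    unfolding ohs val_def by (simp add: sum_distrib_left)
  also have "\<dots> \<le> (\<Sum>f\<in>syms A. \<Sum>xs\<in>tuples ?V (ar A f).
      (\<Sum>i\<in>{i\<in>{..<n}. set xs \<inter> Xf i = {}}. real_of_rat (c i)) * ?ts f xs)"
  proof (intro sum_mono)
    fix f xs assume f: "f \<in> syms A" and xs: "xs \<in> tuples ?V (ar A f)"
    show "L0 * ?ts f xs \<le> (\<Sum>i\<in>{i\<in>{..<n}. set xs \<inter> Xf i = {}}. real_of_rat (c i)) * ?ts f xs"
      by (rule mult_right_mono) (use L f xs term_nonneg[OF A C sig f xs hs] in auto)
  qed
  also have "\<dots> = (\<Sum>f\<in>syms A. \<Sum>xs\<in>tuples ?V (ar A f). \<Sum>i<n. real_of_rat (c i) * ?e i f xs)"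
    by (simp only: sum_filter_mult)
  also have "\<dots> = (\<Sum>i<n. real_of_rat (c i) * (\<Sum>f\<in>syms A. \<Sum>xs\<in>tuples ?V (ar A f). ?e i f xs))"
    by (simp add: sum_distrib_left sum.swap[of _ "{..<n}"])
  also have "\<dots> \<le> val (Bst A n Xf c d) C Hs"
    unfolding valB_eq[OF finA]
    by (rule sum_mono, rule mult_left_mono[OF Ui]) (use c in auto)
  also have "\<dots> \<le> opt (Bst A n Xf c d) C"
    by (rule val_le_opt) (use finD finC Hs in auto)
  finally show ?thesis .
qed


lemma wf_gaifman:
  assumes "finite (sdom A)"
  shows "wf_graph (gaifman A)"
proof -
  have "\<exists>u v. u \<in> sdom A \<and> v \<in> sdom A \<and> u \<noteq> v \<and> e = {u, v}" if e: "e \<in> snd (gaifman A)" for e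
  proof -
    from e obtain u v f xs where "e = {u, v}" "u \<noteq> v" "f \<in> syms A" "xs \<in> tuples (sdom A) (ar A f)"
      "u \<in> set xs" "v \<in> set xs"
      unfolding gaifman_def by auto
    then show ?thesis unfolding tuples_def by blast
  qed
  then show ?thesis using assms unfolding wf_graph_def by (simp add: gaifman_def)
qed

lemma wf_del:
  assumes "wf_graph G"
  shows "wf_graph (del_vertices G X)"
proof -
  have "\<exists>u v. u \<in> fst G - X \<and> v \<in> fst G - X \<and> u \<noteq> v \<and> e = {u, v}"
    if e: "e \<in> snd G" "e \<inter> X = {}" for e
  proof -
    obtain u v where "u \<in> fst G" "v \<in> fst G" "u \<noteq> v" "e = {u, v}"
      using assms e(1) unfolding wf_graph_def by meson
    then show ?thesis using e(2) by blast
  qed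
  then show ?thesis using assms unfolding wf_graph_def del_vertices_def by auto
qed

lemma pos_iff:
  assumes A: "is_struct A" and f: "f \<in> syms A" and c: "\<forall>i<n. 0 < c i" and d: "0 < d"
  shows "0 < Bsfn A n Xf c d f ys \<longleftrightarrow>
    (\<exists>i<n. \<exists>xs\<in>Tset (sdom A) (Xf i) (ar A f). 0 < sfn A f xs \<and> phi i (Xf i) xs = ys)"
proof -
  let ?S = "\<lambda>i. {xs \<in> Tset (sdom A) (Xf i) (ar A f). phi i (Xf i) xs = ys}"
  have finA: "finite (sdom A)" using A by (simp add: is_struct_def)
  have fin: "finite (?S i)" for i using finite_Tset[OF finA] by simp
  have wA: "0 \<le> sfn A f xs" if "xs \<in> Tset (sdom A) (Xf i) (ar A f)" for xs i
  proof -
    have "xs \<in> tuples (sdom A) (ar A f)" using that Tset_sub by blast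
    then show ?thesis using A f unfolding is_struct_def by blast
  qed
  have co: "0 < coef d X xs" for X xs using d by (simp add: coef_def)
  have tn: "0 \<le> c i * coef d (Xf i) xs * sfn A f xs" if "i < n" "xs \<in> ?S i" for i xs
  proof -
    have "0 \<le> c i" using c that(1) by (simp add: less_imp_le)
    moreover have "0 \<le> coef d (Xf i) xs" using co[of "Xf i" xs] by (simp add: less_imp_le)
    moreover have "0 \<le> sfn A f xs" using wA that(2) by blast
    ultimately show ?thesis by (intro mult_nonneg_nonneg)
  qed
  show ?thesis
  proof
    assume pos: "0 < Bsfn A n Xf c d f ys"
    show "\<exists>i<n. \<exists>xs\<in>Tset (sdom A) (Xf i) (ar A f). 0 < sfn A f xs \<and> phi i (Xf i) xs = ys"
    proof (rule ccontr)
      assume "\<not> ?thesis"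
      then have "sfn A f xs = 0" if "i < n" "xs \<in> ?S i" for i xs
        using that wA[of xs i] by force
      then have "Bsfn A n Xf c d f ys = 0" unfolding Bsfn_def by (auto intro!: sum.neutral)
      then show False using pos by simp
    qed
  next
    assume "\<exists>i<n. \<exists>xs\<in>Tset (sdom A) (Xf i) (ar A f). 0 < sfn A f xs \<and> phi i (Xf i) xs = ys"
    then obtain i xs where i: "i < n" and xs: "xs \<in> ?S i" and w: "0 < sfn A f xs" by auto
    have "0 < (\<Sum>xs\<in>?S i. c i * coef d (Xf i) xs * sfn A f xs)"
      by (rule sum_pos2[OF fin xs]) (use c i co w tn[OF i] in auto)
    then show "0 < Bsfn A n Xf c d f ys" unfolding Bsfn_def
      by (intro sum_pos2[of "{..<n}" i]) (use i tn in \<open>auto intro: sum_nonneg\<close>)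
  qed
qed

lemma edgeB:
  assumes A: "is_struct A" and c: "\<forall>i<n. 0 < c i" and d: "0 < d"
    and e: "e \<in> snd (gaifman (Bst A n Xf c d))"
  shows "\<exists>i<n. \<exists>f\<in>syms A. \<exists>xs\<in>Tset (sdom A) (Xf i) (ar A f). 0 < sfn A f xs \<and> e \<subseteq> enc i ` (set xs - Xf i)"
proof -
  from e obtain u v f ys where "e = {u, v}" "f \<in> syms A" "0 < Bsfn A n Xf c d f ys" "u \<in> set ys" "v \<in> set ys"
    unfolding gaifman_def by auto
  moreover from this obtain i xs where "i < n" "xs \<in> Tset (sdom A) (Xf i) (ar A f)" "0 < sfn A f xs"
    "phi i (Xf i) xs = ys"
    using pos_iff[OF A _ c d] by blast
  ultimately show ?thesis using set_phi by blast
qed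


lemma gaifman_edgeI:
  assumes "f \<in> syms X" "ys \<in> tuples (sdom X) (ar X f)" "0 < sfn X f ys" "a \<in> set ys" "b \<in> set ys" "a \<noteq> b"
  shows "{a, b} \<in> snd (gaifman X)"
proof -
  have "\<exists>f\<in>syms X. \<exists>xs\<in>tuples (sdom X) (ar X f). sfn X f xs > 0 \<and> a \<in> set xs \<and> b \<in> set xs"
    using assms by metis
  then show ?thesis unfolding gaifman_def snd_conv mem_Collect_eq using assms(6) by metis
qed

lemma part_eq:
  assumes i: "i < n"
  shows "{z \<in> Dom V n Xf. fst (prod_decode z) = i} = enc i ` (V - Xf i)"
proof
  show "{z \<in> Dom V n Xf. fst (prod_decode z) = i} \<subseteq> enc i ` (V - Xf i)"
    unfolding Dom_def by (auto simp: enc_def)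
  show "enc i ` (V - Xf i) \<subseteq> {z \<in> Dom V n Xf. fst (prod_decode z) = i}"
    using enc_Dom[OF i] by (auto simp: enc_def)
qed

lemma part_iso:
  assumes A: "is_struct A" and c: "\<forall>i<n. 0 < c i" and d: "0 < d" and i: "i < n"
  shows "graph_iso (del_vertices (gaifman A) (Xf i))
     (induced (gaifman (Bst A n Xf c d)) {z \<in> Dom (sdom A) n Xf. fst (prod_decode z) = i})"
proof -
  let ?V = "sdom A" let ?X = "Xf i" let ?B = "Bst A n Xf c d"
  let ?P = "{z \<in> Dom (sdom A) n Xf. fst (prod_decode z) = i}"
  have P: "?P = enc i ` (?V - ?X)" by (rule part_eq[OF i])
  have inj: "inj_on (enc i) X" for X by (auto simp: inj_on_def enc_inj)
  have bij: "bij_betw (enc i) (fst (del_vertices (gaifman A) ?X)) (fst (induced (gaifman ?B) ?P))"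
    unfolding bij_betw_def using inj P by (simp add: del_vertices_def gaifman_def induced_def)
  let ?CL = "\<lambda>u v. u \<noteq> v \<and> (\<exists>f\<in>syms A. \<exists>xs\<in>tuples ?V (ar A f). 0 < sfn A f xs \<and> u \<in> set xs \<and> v \<in> set xs)"
  have L: "{u, v} \<in> snd (del_vertices (gaifman A) ?X) \<longleftrightarrow> ?CL u v"
    if u: "u \<in> ?V - ?X" and v: "v \<in> ?V - ?X" for u v
  proof
    assume "{u, v} \<in> snd (del_vertices (gaifman A) ?X)"
    then obtain a b f xs where ab: "{u, v} = {a, b}" "a \<noteq> b" "f \<in> syms A" "xs \<in> tuples ?V (ar A f)"
      "0 < sfn A f xs" "a \<in> set xs" "b \<in> set xs"
      unfolding del_vertices_def gaifman_def by auto
    from ab(1) have "(u = a \<and> v = b) \<or> (u = b \<and> v = a)" by (simp add: doubleton_eq_iff)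
    then show "?CL u v"
    proof (elim disjE conjE)
      assume "u = a" "v = b" then show ?thesis using ab(2-7) by auto
    next
      assume "u = b" "v = a" then show ?thesis using ab(2-7) by auto
    qed
  next
    assume cl: "?CL u v"
    then have "{u, v} \<in> snd (gaifman A)" using gaifman_edgeI[of _ A _ u v] by blast
    moreover have "{u, v} \<inter> ?X = {}" using u v by auto
    ultimately show "{u, v} \<in> snd (del_vertices (gaifman A) ?X)" by (simp add: del_vertices_def)
  qed
  have R: "{enc i u, enc i v} \<in> snd (induced (gaifman ?B) ?P) \<longleftrightarrow> ?CL u v"
    if u: "u \<in> ?V - ?X" and v: "v \<in> ?V - ?X" for u v
  proof
    assume "{enc i u, enc i v} \<in> snd (induced (gaifman ?B) ?P)"
    then obtain a b f ys where ab: "{enc i u, enc i v} = {a, b}" "a \<noteq> b" "f \<in> syms A"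
      "0 < Bsfn A n Xf c d f ys" "a \<in> set ys" "b \<in> set ys"
      unfolding induced_def gaifman_def by auto
    obtain j xs where j: "j < n" "xs \<in> Tset ?V (Xf j) (ar A f)" "0 < sfn A f xs" "phi j (Xf j) xs = ys"
      using pos_iff[OF A ab(3) c d] ab(4) by blast
    have sy: "set ys = enc j ` (set xs - Xf j)" using set_phi[OF j(2), of j] j(4) by simp
    have "enc i u \<in> {a, b}" "enc i v \<in> {a, b}" unfolding ab(1)[symmetric] by simp_all
    then have uv1: "enc i u \<in> set ys" "enc i v \<in> set ys" using ab(5,6) by auto
    have uv3: "u \<noteq> v"
    proof
      assume "u = v"
      then have "a \<in> {enc i u}" "b \<in> {enc i u}" using ab(1) by (metis insertI1 insert_absorb2, metis insertI1 insert_commute insert_absorb2)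
      then show False using ab(2) by simp
    qed
    note uv = uv1 uv3
    have "u \<in> set xs" "v \<in> set xs" using uv(1,2) unfolding sy by (auto simp: enc_inj)
    moreover have "xs \<in> tuples ?V (ar A f)" using j(2) Tset_sub by blast
    ultimately show "?CL u v" using uv(3) ab(3) j(3) by blast
  next
    assume cl: "?CL u v"
    then obtain f xs where f: "f \<in> syms A" and xs: "xs \<in> tuples ?V (ar A f)" and w: "0 < sfn A f xs"
      and uxs: "u \<in> set xs" and vxs: "v \<in> set xs" and ne: "u \<noteq> v" by blast
    have xsT: "xs \<in> Tset ?V ?X (ar A f)" using xs uxs u unfolding Tset_def by auto
    define ys where "ys = phi i ?X xs"
    have ys: "ys \<in> tuples (Dom ?V n Xf) (ar A f)" unfolding ys_def by (rule phi_tuples[of xs ?V Xf i "ar A f" n, OF xsT i])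
    have pos: "0 < Bsfn A n Xf c d f ys" using pos_iff[OF A f c d] i xsT w unfolding ys_def by blast
    have sy: "set ys = enc i ` (set xs - ?X)" unfolding ys_def by (rule set_phi[OF xsT])
    have inys: "enc i u \<in> set ys" "enc i v \<in> set ys" unfolding sy using uxs vxs u v by auto
    have "enc i u \<noteq> enc i v" using ne by (simp add: enc_inj)
    then have "{enc i u, enc i v} \<in> snd (gaifman ?B)"
      using gaifman_edgeI[of f ?B ys "enc i u" "enc i v"] f ys pos inys by simp
    moreover have "{enc i u, enc i v} \<subseteq> ?P" unfolding P using u v by auto
    ultimately show "{enc i u, enc i v} \<in> snd (induced (gaifman ?B) ?P)" by (simp add: induced_def)
  qed
  have fv: "fst (del_vertices (gaifman A) ?X) = ?V - ?X" by (simp add: del_vertices_def gaifman_def)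
  show ?thesis unfolding graph_iso_def
  proof (intro exI conjI ballI)
    show "bij_betw (enc i) (fst (del_vertices (gaifman A) ?X)) (fst (induced (gaifman ?B) ?P))" by (rule bij)
  next
    fix u v assume "u \<in> fst (del_vertices (gaifman A) ?X)" "v \<in> fst (del_vertices (gaifman A) ?X)"
    then have "u \<in> ?V - ?X" "v \<in> ?V - ?X" unfolding fv by simp_all
    then show "{u, v} \<in> snd (del_vertices (gaifman A) ?X) \<longleftrightarrow> {enc i u, enc i v} \<in> snd (induced (gaifman ?B) ?P)"
      using L R by simp
  qed
qed


lemma pB:
  fixes p :: "graph \<Rightarrow> nat"
  assumes p_iso: "\<And>G H. wf_graph G \<Longrightarrow> wf_graph H \<Longrightarrow> graph_iso G H \<Longrightarrow> p G = p H"
    and p_union: "\<And>G H. wf_graph G \<Longrightarrow> wf_graph H \<Longrightarrow> p (disj_union G H) = max (p G) (p H)"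
    and A: "is_struct A" and c: "\<forall>i<n. 0 < c i" and d: "0 < d" and n: "0 < n"
    and bound: "\<forall>i<n. p (del_vertices (gaifman A) (Xf i)) \<le> k"
  shows "p (gaifman (Bst A n Xf c d)) \<le> k"
proof -
  let ?B = "Bst A n Xf c d" let ?G = "gaifman ?B" let ?q = "\<lambda>z. fst (prod_decode z)"
  have finA: "finite (sdom A)" using A by (simp add: is_struct_def)
  have wfG: "wf_graph ?G" by (rule wf_gaifman) (simp add: finite_Dom finA)
  have fG: "fst ?G = Dom (sdom A) n Xf" by (simp add: gaifman_def)
  have wfA: "wf_graph (gaifman A)" by (rule wf_gaifman[OF finA])
  show ?thesis
  proof (rule p_parts[OF p_iso p_union wfG, of "{..<n}" ?q])
    show "finite {..<n}" by simp
    show "{..<n} \<noteq> {}" using n by auto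
    show "\<forall>v\<in>fst ?G. ?q v \<in> {..<n}" unfolding fG Dom_def by (auto simp: enc_def)
    show "\<forall>e\<in>snd ?G. \<forall>u\<in>e. \<forall>v\<in>e. ?q u = ?q v"
    proof (intro ballI)
      fix e u v assume e: "e \<in> snd ?G" and u: "u \<in> e" and v: "v \<in> e"
      obtain i f xs where "e \<subseteq> enc i ` (set xs - Xf i)" using edgeB[OF A c d e] by blast
      then have "u \<in> enc i ` (set xs - Xf i)" "v \<in> enc i ` (set xs - Xf i)" using u v by auto
      then show "?q u = ?q v" by (auto simp: enc_def)
    qed
    show "\<forall>i\<in>{..<n}. p (induced ?G {v \<in> fst ?G. ?q v = i}) \<le> k"
    proof
      fix i assume i: "i \<in> {..<n}"
      have "p (del_vertices (gaifman A) (Xf i)) = p (induced ?G {v \<in> fst ?G. ?q v = i})"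
        unfolding fG
        by (rule p_iso[OF wf_del[OF wfA] wf_induced[OF wfG] part_iso[OF A c d]]) (use i in \<open>auto simp: fG\<close>)
      moreover have "p (del_vertices (gaifman A) (Xf i)) \<le> k" using bound i by simp
      ultimately show "p (induced ?G {v \<in> fst ?G. ?q v = i}) \<le> k" by simp
    qed
  qed
qed


lemma pmf_sum_part:
  fixes \<pi> :: "nat set pmf" and n :: nat and Xf :: "nat \<Rightarrow> nat set"
  assumes bij: "bij_betw Xf {..<n} (set_pmf \<pi>)"
  shows "(\<Sum>i\<in>{i\<in>{..<n}. P (Xf i)}. pmf \<pi> (Xf i)) = measure_pmf.prob \<pi> {X. P X}"
proof -
  have fin: "finite (set_pmf \<pi>)" using bij_betw_finite[OF bij] finite_lessThan[of n] by (rule iffD1)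
  have inj: "inj_on Xf {i\<in>{..<n}. P (Xf i)}"
    by (rule inj_on_subset[OF bij_betw_imp_inj_on[OF bij]]) auto
  have im: "Xf ` {..<n} = set_pmf \<pi>" using bij by (rule bij_betw_imp_surj_on)
  have "Xf ` {i\<in>{..<n}. P (Xf i)} = {X \<in> Xf ` {..<n}. P X}" by auto
  then have img: "Xf ` {i\<in>{..<n}. P (Xf i)} = {X \<in> set_pmf \<pi>. P X}" unfolding im .
  have "(\<Sum>i\<in>{i\<in>{..<n}. P (Xf i)}. pmf \<pi> (Xf i)) = (\<Sum>X\<in>Xf ` {i\<in>{..<n}. P (Xf i)}. pmf \<pi> X)"
    using sum.reindex[OF inj, of "pmf \<pi>"] by (simp only: comp_def)
  also have "\<dots> = measure_pmf.prob \<pi> {X \<in> set_pmf \<pi>. P X}"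
    unfolding img by (rule measure_measure_pmf_finite[symmetric]) (use fin in simp)
  also have "{X \<in> set_pmf \<pi>. P X} = {X. P X} \<inter> set_pmf \<pi>" by auto
  also have "measure_pmf.prob \<pi> \<dots> = measure_pmf.prob \<pi> {X. P X}" by (rule measure_Int_set_pmf)
  finally show ?thesis .
qed

lemma ln_dist_bound:
  fixes a b e :: real
  assumes a: "0 \<le> a" and e: "0 < e" and ub: "b \<le> (1 + e) * a" and lb: "a \<le> (1 + e) * b"
  shows "ln_dist a b \<le> ereal e"
proof (cases "a = 0")
  case True
  then have "b \<le> 0" using ub by simp
  moreover have "0 \<le> b"
  proof -
    have "0 \<le> (1 + e) * b" using lb True by simp
    then show ?thesis using e by (simp add: zero_le_mult_iff)
  qed
  ultimately have "b = 0" by simp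
  then show ?thesis using True e by (simp add: ln_dist_def)
next
  case False
  then have ap: "0 < a" using a by simp
  have bp: "0 < b"
  proof (rule ccontr)
    assume "\<not> 0 < b"
    then have "(1 + e) * b \<le> 0" using e by (simp add: mult_nonneg_nonpos)
    then show False using lb ap by simp
  qed
  have l1: "ln (1 + e) \<le> e" using e by (intro ln_add_one_self_le_self) simp
  have "ln b \<le> ln ((1 + e) * a)" using ub bp by simp
  also have "\<dots> = ln (1 + e) + ln a" using ap e by (simp add: ln_mult)
  finally have u: "ln b \<le> ln (1 + e) + ln a" .
  have "ln a \<le> ln ((1 + e) * b)" using lb ap by simp
  also have "\<dots> = ln (1 + e) + ln b" using bp e by (simp add: ln_mult)
  finally have v: "ln a \<le> ln (1 + e) + ln b" .
  have "\<bar>ln a - ln b\<bar> \<le> e" using u v l1 by linarith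
  then show ?thesis using ap bp by (simp add: ln_dist_def)
qed



theorem lemma19:
  fixes p :: "graph \<Rightarrow> nat" and \<A> :: "'s vstruct set" and r :: nat
  assumes p_iso: "\<And>G H. wf_graph G \<Longrightarrow> wf_graph H \<Longrightarrow> graph_iso G H \<Longrightarrow> p G = p H"
    and p_union: "\<And>G H. wf_graph G \<Longrightarrow> wf_graph H \<Longrightarrow> p (disj_union G H) = max (p G) (p H)"
    and structs: "\<forall>A\<in>\<A>. is_struct A"
    and arity: "\<forall>A\<in>\<A>. \<forall>f\<in>syms A. ar A f \<le> r"
    and fragile: "frac_fragile p (gaifman ` \<A>)"
  shows "pliable p \<A>"
  unfolding pliable_def
proof (intro allI impI)
  fix \<epsilon> :: real assume ep: "\<epsilon> > 0"
  define e1 where "e1 = \<epsilon> / ((1 + \<epsilon>) * (real r + 1))"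
  have e1p: "0 < e1" unfolding e1_def using ep by simp
  have re1: "real r * e1 \<le> \<epsilon> / (1 + \<epsilon>)"
  proof -
    have "real r * e1 = (\<epsilon> / (1 + \<epsilon>)) * (real r / (real r + 1))"
      unfolding e1_def by (simp add: field_simps)
    also have "\<dots> \<le> (\<epsilon> / (1 + \<epsilon>)) * 1"
      by (rule mult_left_mono) (use ep in auto)
    finally show ?thesis by simp
  qed
  have e1lt: "e1 < 1"
  proof -
    have "e1 = (\<epsilon> / (1 + \<epsilon>)) * (1 / (real r + 1))" unfolding e1_def by (simp add: field_simps)
    also have "\<dots> \<le> (\<epsilon> / (1 + \<epsilon>)) * 1"
      by (rule mult_left_mono) (use ep in auto)
    also have "\<dots> < 1" using ep by simp
    finally show ?thesis .
  qed
  have lowfac: "1 \<le> (1 + \<epsilon>) * (1 - real r * e1)"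
  proof -
    have "(1 + \<epsilon>) * (1 - \<epsilon> / (1 + \<epsilon>)) = 1" using ep by (simp add: field_simps)
    moreover have "(1 + \<epsilon>) * (1 - \<epsilon> / (1 + \<epsilon>)) \<le> (1 + \<epsilon>) * (1 - real r * e1)"
      by (rule mult_left_mono) (use re1 ep in auto)
    ultimately show ?thesis by simp
  qed
  obtain k where K: "\<forall>G\<in>gaifman ` \<A>. \<exists>\<pi> :: nat set pmf.
        (\<forall>X\<in>set_pmf \<pi>. X \<subseteq> fst G \<and> p (del_vertices G X) \<le> k) \<and>
        (\<forall>v\<in>fst G. measure_pmf.prob \<pi> {X. v \<in> X} \<le> e1)"
    using fragile[unfolded frac_fragile_def, rule_format, OF e1p] by (elim exE) (rule that)
  show "\<exists>k. \<forall>A\<in>\<A>. \<exists>B. is_struct B \<and> same_sig B A \<and> p (gaifman B) \<le> k \<and> d_opt A B \<le> ereal \<epsilon>"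
  proof (rule exI[of _ k], intro ballI)
    fix A assume AA: "A \<in> \<A>"
    have A: "is_struct A" using structs AA by blast
    have finA: "finite (sdom A)" and neA: "sdom A \<noteq> {}" using A by (auto simp: is_struct_def)
    have fg: "fst (gaifman A) = sdom A" by (simp add: gaifman_def)
    have gA: "gaifman A \<in> gaifman ` \<A>" using AA by (rule imageI)
    obtain \<pi> :: "nat set pmf" where
      pi1: "\<forall>X\<in>set_pmf \<pi>. X \<subseteq> sdom A \<and> p (del_vertices (gaifman A) X) \<le> k" and
      pi2: "\<forall>v\<in>sdom A. measure_pmf.prob \<pi> {X. v \<in> X} \<le> e1"
      using K[rule_format, OF gA] unfolding fg by (elim exE conjE) (rule that)
    obtain \<theta> :: rat where th: "0 < real_of_rat \<theta>" "real_of_rat \<theta> < min 1 (\<epsilon> / 3)"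
      using of_rat_dense[of 0 "min 1 (\<epsilon> / 3)"] ep by auto
    define N where "N = (\<Sum>f\<in>syms A. card (tuples (sdom A) (ar A f)))"
    define d :: rat where "d = \<theta> / (of_nat N + 1)"
    have dp: "0 < d" unfolding d_def using th by simp
    have dN: "real_of_rat d * real N \<le> real_of_rat \<theta>"
    proof -
      have "real_of_rat d * real N = real_of_rat \<theta> * (real N / (real N + 1))"
        unfolding d_def by (simp add: of_rat_divide of_rat_add field_simps)
      also have "\<dots> \<le> real_of_rat \<theta> * 1"
        by (rule mult_left_mono) (use th in auto)
      finally show ?thesis by simp
    qed
    have finP: "finite (set_pmf \<pi>)"
    proof (rule finite_subset)
      show "set_pmf \<pi> \<subseteq> Pow (sdom A)" using pi1 by auto
      show "finite (Pow (sdom A))" using finA by simp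
    qed
    define n where "n = card (set_pmf \<pi>)"
    obtain Xf :: "nat \<Rightarrow> nat set" where bij: "bij_betw Xf {..<n} (set_pmf \<pi>)"
      using ex_bij_betw_nat_finite[OF finP] unfolding n_def atLeast0LessThan by blast
    have np: "0 < n" unfolding n_def using finP set_pmf_not_empty[of \<pi>] by (simp add: card_gt_0_iff)
    have Xin: "Xf i \<in> set_pmf \<pi>" if "i < n" for i
      using bij that unfolding bij_betw_def by auto
    have "\<forall>i. \<exists>q::rat. pmf \<pi> (Xf i) < real_of_rat q \<and> real_of_rat q < pmf \<pi> (Xf i) + real_of_rat \<theta> / real n"
      by (intro allI of_rat_dense) (use th np in simp)
    from choice[OF this] obtain c :: "nat \<Rightarrow> rat" where
      call: "\<forall>i. pmf \<pi> (Xf i) < real_of_rat (c i) \<and> real_of_rat (c i) < pmf \<pi> (Xf i) + real_of_rat \<theta> / real n"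
      by (elim exE) (rule that)
    have c: "\<And>i. pmf \<pi> (Xf i) < real_of_rat (c i)"
        "\<And>i. real_of_rat (c i) < pmf \<pi> (Xf i) + real_of_rat \<theta> / real n"
      using call by simp_all
    have cpos: "\<forall>i<n. 0 < c i"
    proof (intro allI impI)
      fix i have "0 < real_of_rat (c i)" using c(1)[of i] pmf_nonneg[of \<pi> "Xf i"] by linarith
      then show "0 < c i" by simp
    qed
    have cnn: "\<forall>i<n. 0 \<le> c i" using cpos by (simp add: less_imp_le)
    have sum1: "(\<Sum>i<n. pmf \<pi> (Xf i)) = 1"
      using pmf_sum_part[OF bij, of "\<lambda>_. True"] by (simp add: measure_pmf.prob_space[simplified] lessThan_def)
    have sumc: "(\<Sum>i<n. real_of_rat (c i)) \<le> 1 + real_of_rat \<theta>"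
    proof -
      have "(\<Sum>i<n. real_of_rat (c i)) \<le> (\<Sum>i<n. pmf \<pi> (Xf i) + real_of_rat \<theta> / real n)"
        by (rule sum_mono) (use c(2) in \<open>simp add: less_imp_le\<close>)
      also have "\<dots> = 1 + real_of_rat \<theta>" using sum1 np by (simp add: sum.distrib)
      finally show ?thesis .
    qed
    have L: "\<forall>f\<in>syms A. \<forall>xs\<in>tuples (sdom A) (ar A f).
              1 - real r * e1 \<le> (\<Sum>i\<in>{i\<in>{..<n}. set xs \<inter> Xf i = {}}. real_of_rat (c i))"
    proof (intro ballI)
      fix f xs assume f: "f \<in> syms A" and xs: "xs \<in> tuples (sdom A) (ar A f)"
      have sub: "set xs \<subseteq> sdom A" and len: "length xs = ar A f" using xs by (auto simp: tuples_def)
      have lr: "length xs \<le> r" using arity AA f len by auto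
      have "measure_pmf.prob \<pi> {X. set xs \<inter> X \<noteq> {}} = measure_pmf.prob \<pi> (\<Union>v\<in>set xs. {X. v \<in> X})"
        by (rule arg_cong[where f = "measure_pmf.prob \<pi>"]) auto
      also have "\<dots> \<le> (\<Sum>v\<in>set xs. measure_pmf.prob \<pi> {X. v \<in> X})"
        by (rule measure_pmf.finite_measure_subadditive_finite) auto
      also have "\<dots> \<le> (\<Sum>v\<in>set xs. e1)"
        by (rule sum_mono) (use pi2 sub in auto)
      also have "\<dots> = real (card (set xs)) * e1" by simp
      also have "\<dots> \<le> real r * e1"
        by (rule mult_right_mono) (use card_length[of xs] lr e1p in auto)
      finally have hit: "measure_pmf.prob \<pi> {X. set xs \<inter> X \<noteq> {}} \<le> real r * e1" .
      have "measure_pmf.prob \<pi> {X. set xs \<inter> X = {}} = measure_pmf.prob \<pi> (space (measure_pmf \<pi>) - {X. set xs \<inter> X \<noteq> {}})"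
        by (rule arg_cong[where f = "measure_pmf.prob \<pi>"]) auto
      also have "\<dots> = 1 - measure_pmf.prob \<pi> {X. set xs \<inter> X \<noteq> {}}"
        by (rule measure_pmf.prob_compl) simp
      finally have miss: "1 - real r * e1 \<le> measure_pmf.prob \<pi> {X. set xs \<inter> X = {}}" using hit by simp
      also have "\<dots> = (\<Sum>i\<in>{i\<in>{..<n}. set xs \<inter> Xf i = {}}. pmf \<pi> (Xf i))"
        by (rule pmf_sum_part[OF bij, symmetric])
      also have "\<dots> \<le> (\<Sum>i\<in>{i\<in>{..<n}. set xs \<inter> Xf i = {}}. real_of_rat (c i))"
        by (rule sum_mono) (use c(1) in \<open>simp add: less_imp_le\<close>)
      finally show "1 - real r * e1 \<le> (\<Sum>i\<in>{i\<in>{..<n}. set xs \<inter> Xf i = {}}. real_of_rat (c i))" .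
    qed
    define B where "B = Bst A n Xf c d"
    show "\<exists>B. is_struct B \<and> same_sig B A \<and> p (gaifman B) \<le> k \<and> d_opt A B \<le> ereal \<epsilon>"
    proof (rule exI[of _ B], intro conjI)
      show "same_sig B A" unfolding B_def by (simp add: same_sig_def)
      show "is_struct B"
      proof -
        have "Dom (sdom A) n Xf \<noteq> {}"
        proof -
          obtain v where v: "v \<in> sdom A" using neA by blast
          have "\<exists>i<n. v \<notin> Xf i"
          proof (rule ccontr)
            assume "\<not> ?thesis"
            then have "{i\<in>{..<n}. v \<in> Xf i} = {..<n}" by auto
            then have "measure_pmf.prob \<pi> {X. v \<in> X} = 1"
              using pmf_sum_part[OF bij, of "\<lambda>X. v \<in> X"] sum1 by simp
            moreover have "measure_pmf.prob \<pi> {X. v \<in> X} \<le> e1" using pi2 v by simp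
            ultimately show False using e1lt by linarith
          qed
          then obtain i where "i < n" "v \<notin> Xf i" by blast
          then have "enc i v \<in> Dom (sdom A) n Xf" using enc_Dom v by blast
          then show ?thesis by blast
        qed
        moreover have "0 \<le> Bsfn A n Xf c d f xs" if "f \<in> syms A" for f xs
        proof -
          have "0 \<le> c i * coef d (Xf i) ys * sfn A f ys" if "i < n" "ys \<in> Tset (sdom A) (Xf i) (ar A f)" for i ys
          proof -
            have "0 \<le> c i" using cnn that(1) by simp
            moreover have "0 \<le> coef d (Xf i) ys" using dp by (simp add: coef_def)
            moreover have "ys \<in> tuples (sdom A) (ar A f)" using that(2) Tset_sub by blast
            then have "0 \<le> sfn A f ys" using A \<open>f \<in> syms A\<close> unfolding is_struct_def by blast
            ultimately show ?thesis by (intro mult_nonneg_nonneg)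
          qed
          then show ?thesis unfolding Bsfn_def by (intro sum_nonneg) auto
        qed
        ultimately show ?thesis unfolding B_def is_struct_def
          using A finA by (simp add: is_struct_def finite_Dom)
      qed
      have bnd: "\<forall>i<n. p (del_vertices (gaifman A) (Xf i)) \<le> k"
      proof (intro allI impI)
        fix i assume "i < n"
        then have "Xf i \<in> set_pmf \<pi>" by (rule Xin)
        then show "p (del_vertices (gaifman A) (Xf i)) \<le> k" using pi1 by simp
      qed
      show "p (gaifman B) \<le> k" unfolding B_def
        by (rule pB[OF p_iso p_union A cpos dp np bnd])
      show "d_opt A B \<le> ereal \<epsilon>"
        unfolding d_opt_def
      proof (rule Sup_least)
        fix x assume "x \<in> {ln_dist (opt A C) (opt B C) | C. is_struct C \<and> same_sig C A}"
        then obtain C where x: "x = ln_dist (opt A C) (opt B C)" and C: "is_struct C" and sig: "same_sig C A"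
          by blast
        have a0: "0 \<le> opt A C" by (rule opt_nonneg[OF A C sig])
        have "opt B C \<le> (\<Sum>i<n. real_of_rat (c i)) * ((1 + real_of_rat d * real N) * opt A C)"
          unfolding B_def N_def by (rule optB_upper[OF A C sig less_imp_le[OF dp] cnn])
        also have "\<dots> \<le> (1 + real_of_rat \<theta>) * ((1 + real_of_rat \<theta>) * opt A C)"
        proof -
          have m1: "(1 + real_of_rat d * real N) * opt A C \<le> (1 + real_of_rat \<theta>) * opt A C"
            by (rule mult_right_mono) (use dN a0 in auto)
          have m2: "0 \<le> (1 + real_of_rat d * real N) * opt A C" using dp a0 by simp
          have m3: "0 \<le> 1 + real_of_rat \<theta>" using th by simp
          show ?thesis by (rule mult_mono[OF sumc m1 m3 m2])
        qed
        also have "\<dots> \<le> (1 + \<epsilon>) * opt A C"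
        proof -
          have "(1 + real_of_rat \<theta>) * (1 + real_of_rat \<theta>) \<le> 1 + \<epsilon>"
          proof -
            have "(1 + real_of_rat \<theta>) * (1 + real_of_rat \<theta>) = 1 + 2 * real_of_rat \<theta> + real_of_rat \<theta> * real_of_rat \<theta>"
              by (simp add: algebra_simps)
            also have "real_of_rat \<theta> * real_of_rat \<theta> \<le> real_of_rat \<theta> * 1"
              by (rule mult_left_mono) (use th in auto)
            finally show ?thesis using th by simp
          qed
          then show ?thesis using a0 by (simp add: mult.assoc[symmetric] mult_right_mono)
        qed
        finally have ub: "opt B C \<le> (1 + \<epsilon>) * opt A C" .
        have "(1 - real r * e1) * opt A C \<le> opt B C"
          unfolding B_def by (rule optB_lower[OF A C sig less_imp_le[OF dp] cnn L])
        then have "(1 + \<epsilon>) * ((1 - real r * e1) * opt A C) \<le> (1 + \<epsilon>) * opt B C"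
          using ep by (intro mult_left_mono) auto
        moreover have "opt A C \<le> (1 + \<epsilon>) * ((1 - real r * e1) * opt A C)"
          using mult_right_mono[OF lowfac a0] by (simp add: mult.assoc)
        ultimately have lb: "opt A C \<le> (1 + \<epsilon>) * opt B C" by linarith
        show "x \<le> ereal \<epsilon>" unfolding x by (rule ln_dist_bound[OF a0 ep ub lb])
      qed
    qed
  qed
qed


end
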